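(* For every $d\ge 3$ the cyclic Kautz digraph $CK(d,3)$ satisfies: (a) it is $(d-1)$-regular; (b) it has $N=d^3-d$ vertices and $(d+1)d(d-1)^2$ arcs; (c) its diameter is $5$; (d) it is (isomorphic to) the line digraph of the subKautz digraph $sK(d,2)$, and $sK(d,2)$ is obtained from the Kautz digraph $K(d,2)$ by removing all arcs belonging to digons (directed 2-cycles); (e) it is vertex-transitive; (f) it is Eulerian and Hamiltonian.
   Context: Kautz digraph $K(d,\ell)$: vertices $x_1\ldots x_\ell\in\mathbb Z_{d+1}^\ell$ with $x_i\neq x_{i+1}$; arcs $x_1\ldots x_\ell\to x_2\ldots x_\ell y$ for $y\neq x_\ell$. SubKautz digraph $sK(d,\ell)$: same vertices; arcs $x_1\ldots x_\ell\to x_2\ldots x_\ell x_{\ell+1}$ for $x_{\ell+1}\neq x_1,x_\ell$. Cyclic Kautz digraph $CK(d,\ell)$: vertices $x_1\ldots x_\ell$ with $x_i\neq x_{i+1}$ ($1\le i\le\ell-1$) and $x_\ell\neq x_1$; arcs $x_1\ldots x_\ell\to x_2\ldots x_\ell y$ for $y\neq x_2,x_\ell$. The line digraph $L(G)$ has the arcs of $G$ as vertices, with $(u,v)\to(w,z)$ iff $v=w$. *)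

theory Defs
  imports Main "HOL-Library.Extended_Nat"
begin

type_synonym 'a digraph = "'a set \<times> ('a \<times> 'a) set"

definition verts :: "'a digraph \<Rightarrow> 'a set" where "verts G = fst G"
definition arcs :: "'a digraph \<Rightarrow> ('a \<times> 'a) set" where "arcs G = snd G"

definition kautz_words :: "nat \<Rightarrow> nat \<Rightarrow> nat list set" where
  "kautz_words d l = {xs. length xs = l \<and> set xs \<subseteq> {0..d} \<and>
                          (\<forall>i. i + 1 < l \<longrightarrow> xs ! i \<noteq> xs ! (i + 1))}"

definition kautz :: "nat \<Rightarrow> nat \<Rightarrow> nat list digraph" where
  "kautz d l = (kautz_words d l,
     {(xs, ys). xs \<in> kautz_words d l \<and>
        (\<exists>y. y \<le> d \<and> y \<noteq> last xs \<and> ys = tl xs @ [y])})"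

definition subkautz :: "nat \<Rightarrow> nat \<Rightarrow> nat list digraph" where
  "subkautz d l = (kautz_words d l,
     {(xs, ys). xs \<in> kautz_words d l \<and>
        (\<exists>y. y \<le> d \<and> y \<noteq> hd xs \<and> y \<noteq> last xs \<and> ys = tl xs @ [y])})"

definition cyclic_kautz_words :: "nat \<Rightarrow> nat \<Rightarrow> nat list set" where
  "cyclic_kautz_words d l = {xs \<in> kautz_words d l. last xs \<noteq> hd xs}"

definition cyclic_kautz :: "nat \<Rightarrow> nat \<Rightarrow> nat list digraph" where
  "cyclic_kautz d l = (cyclic_kautz_words d l,
     {(xs, ys). xs \<in> cyclic_kautz_words d l \<and>
        (\<exists>y. y \<le> d \<and> y \<noteq> xs ! 1 \<and> y \<noteq> last xs \<and> ys = tl xs @ [y])})"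

definition line_digraph :: "'a digraph \<Rightarrow> ('a \<times> 'a) digraph" where
  "line_digraph G = (arcs G, {(a, b). a \<in> arcs G \<and> b \<in> arcs G \<and> snd a = fst b})"

definition out_degree :: "'a digraph \<Rightarrow> 'a \<Rightarrow> nat" where
  "out_degree G v = card {w. (v, w) \<in> arcs G}"

definition in_degree :: "'a digraph \<Rightarrow> 'a \<Rightarrow> nat" where
  "in_degree G v = card {u. (u, v) \<in> arcs G}"

definition regular :: "'a digraph \<Rightarrow> nat \<Rightarrow> bool" where
  "regular G k \<longleftrightarrow> (\<forall>v \<in> verts G. out_degree G v = k \<and> in_degree G v = k)"

text \<open>Distance = length of a shortest walk (infinity if none); diameter = max distance.\<close>
definition dg_dist :: "'a digraph \<Rightarrow> 'a \<Rightarrow> 'a \<Rightarrow> enat" where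
  "dg_dist G u v = (INF k \<in> {k. (u, v) \<in> (arcs G) ^^ k}. enat k)"

definition diameter :: "'a digraph \<Rightarrow> enat" where
  "diameter G = (SUP u \<in> verts G. SUP v \<in> verts G. dg_dist G u v)"

definition dg_iso :: "'a digraph \<Rightarrow> 'b digraph \<Rightarrow> bool" where
  "dg_iso G H \<longleftrightarrow> (\<exists>f. bij_betw f (verts G) (verts H) \<and>
      (\<forall>u \<in> verts G. \<forall>v \<in> verts G. (u, v) \<in> arcs G \<longleftrightarrow> (f u, f v) \<in> arcs H))"

definition remove_digons :: "'a digraph \<Rightarrow> 'a digraph" where
  "remove_digons G = (verts G, {(u, v) \<in> arcs G. (v, u) \<notin> arcs G})"

definition automorphism :: "'a digraph \<Rightarrow> ('a \<Rightarrow> 'a) \<Rightarrow> bool" where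
  "automorphism G f \<longleftrightarrow> bij_betw f (verts G) (verts G) \<and>
      (\<forall>u \<in> verts G. \<forall>v \<in> verts G. (u, v) \<in> arcs G \<longleftrightarrow> (f u, f v) \<in> arcs G)"

definition vertex_transitive :: "'a digraph \<Rightarrow> bool" where
  "vertex_transitive G \<longleftrightarrow>
     (\<forall>u \<in> verts G. \<forall>v \<in> verts G. \<exists>f. automorphism G f \<and> f u = v)"

definition eulerian :: "'a digraph \<Rightarrow> bool" where
  "eulerian G \<longleftrightarrow> (\<exists>es. es \<noteq> [] \<and> distinct es \<and> set es = arcs G \<and>
      (\<forall>i. i + 1 < length es \<longrightarrow> snd (es ! i) = fst (es ! (i + 1))) \<and>
      snd (last es) = fst (hd es))"

definition hamiltonian :: "'a digraph \<Rightarrow> bool" where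
  "hamiltonian G \<longleftrightarrow> (\<exists>vs. vs \<noteq> [] \<and> distinct vs \<and> set vs = verts G \<and>
      (\<forall>i. i + 1 < length vs \<longrightarrow> (vs ! i, vs ! (i + 1)) \<in> arcs G) \<and>
      (last vs, hd vs) \<in> arcs G)"

end

theory Submission imports Defs "Graph_Theory.Graph_Theory" begin

hide_const (open) pre_digraph.verts pre_digraph.arcs Digraph.in_degree Digraph.out_degree

lemma pcas_props:
  "pcas u p v \<Longrightarrow> (\<forall>i. i + 1 < length p \<longrightarrow> snd (p ! i) = fst (p ! (i + 1)))
     \<and> (p \<noteq> [] \<longrightarrow> fst (hd p) = u \<and> snd (last p) = v)"
proof (induction p arbitrary: u)
  case Nil then show ?case by simp
next
  case (Cons e es)
  then have h: "fst e = u" "pcas (snd e) es v" by auto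
  from Cons.IH[OF h(2)] have ih: "\<forall>i. i + 1 < length es \<longrightarrow> snd (es ! i) = fst (es ! (i + 1))"
     "es \<noteq> [] \<longrightarrow> fst (hd es) = snd e \<and> snd (last es) = v" by auto
  have A: "\<forall>i. i + 1 < length (e # es) \<longrightarrow> snd ((e#es) ! i) = fst ((e#es) ! (i + 1))"
  proof (intro allI impI)
    fix i assume "i + 1 < length (e # es)"
    then show "snd ((e#es) ! i) = fst ((e#es) ! (i + 1))"
      using ih by (cases i) (auto simp: hd_conv_nth)
  qed
  have B: "snd (last (e#es)) = v"
    using ih h by (cases "es = []") auto
  show ?case using A B h by auto
qed

lemma euler_pair:
  fixes V :: "'a set" and A :: "('a \<times> 'a) set"
  assumes fin: "finite V" and sub: "A \<subseteq> V \<times> V" and ne: "A \<noteq> {}"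
    and conn: "\<forall>u\<in>V. \<forall>v\<in>V. (u, v) \<in> A\<^sup>*"
    and bal: "\<forall>v\<in>V. card {w. (v, w) \<in> A} = card {u. (u, v) \<in> A}"
  shows "eulerian (V, A)"
proof -
  define G where "G = \<lparr>pverts = V, parcs = A\<rparr>"
  have finA: "finite A" using fin sub by (meson finite_SigmaI finite_subset)
  have fd: "fin_digraph (with_proj G)"
    by unfold_locales (use sub fin finA in \<open>auto simp: G_def\<close>)
  have con: "connected (with_proj G)"
    unfolding connected_def strongly_connected_def reachable_def
  proof (intro conjI ballI)
    show "pre_digraph.verts (with_proj (mk_symmetric (with_proj G))) \<noteq> {}"
      using ne sub by (auto simp: G_def)
  next
    fix u v assume u: "u \<in> pre_digraph.verts (with_proj (mk_symmetric (with_proj G)))"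
      and v: "v \<in> pre_digraph.verts (with_proj (mk_symmetric (with_proj G)))"
    then have uv: "u \<in> V" "v \<in> V" by (auto simp: G_def)
    have "(u, v) \<in> rtrancl_on V A"
      by (rule rtrancl_consistent_rtrancl_on) (use conn uv sub in auto)
    then show "(u, v) \<in> rtrancl_on (pre_digraph.verts (with_proj (mk_symmetric (with_proj G))))
          (arcs_ends (with_proj (mk_symmetric (with_proj G))))"
      by (rule rtrancl_on_mono[rotated 2]) (auto simp: G_def parcs_mk_symmetric)
  qed
  have deg: "\<And>u. u \<in> pre_digraph.verts (with_proj G) \<Longrightarrow>
      Digraph.in_degree (with_proj G) u = Digraph.out_degree (with_proj G) u"
  proof -
    fix u assume "u \<in> pre_digraph.verts (with_proj G)"
    then have u: "u \<in> V" by (simp add: G_def)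
    have i: "in_arcs (with_proj G) u = (\<lambda>x. (x, u)) ` {x. (x, u) \<in> A}"
      by (auto simp: in_arcs_def G_def)
    have o: "out_arcs (with_proj G) u = (\<lambda>x. (u, x)) ` {x. (u, x) \<in> A}"
      by (auto simp: out_arcs_def G_def)
    show "Digraph.in_degree (with_proj G) u = Digraph.out_degree (with_proj G) u"
      unfolding Digraph.in_degree_def Digraph.out_degree_def i o
      using bal u by (simp add: card_image inj_on_def)
  qed
  obtain u p where et: "pre_digraph.euler_trail (with_proj G) u p u"
    using fin_digraph.closed_euler1[OF fd con deg] by blast
  then have tr: "pre_digraph.trail (with_proj G) u p u" and sp: "set p = A"
    by (auto simp: pre_digraph.euler_trail_def G_def)
  then have "distinct p" "pcas u p u"
    by (auto simp: pre_digraph.trail_def pre_digraph.awalk_def cas_with_proj_eq)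
  moreover have "p \<noteq> []" using sp ne by auto
  ultimately show ?thesis using pcas_props[of u p u] sp
    unfolding eulerian_def Defs.arcs_def by (intro exI[of _ p]) auto
qed



lemma cond3: "(\<forall>i. i + 1 < (3::nat) \<longrightarrow> [a,b,c]!i \<noteq> [a,b,c]!(i+1)) \<longleftrightarrow> a\<noteq>b \<and> b\<noteq>c"
proof
  assume h: "\<forall>i. i + 1 < (3::nat) \<longrightarrow> [a,b,c]!i \<noteq> [a,b,c]!(i+1)"
  show "a\<noteq>b \<and> b\<noteq>c" using h[rule_format, of 0] h[rule_format, of 1] by simp
next
  assume "a\<noteq>b \<and> b\<noteq>c"
  then show "\<forall>i. i + 1 < (3::nat) \<longrightarrow> [a,b,c]!i \<noteq> [a,b,c]!(i+1)"
  proof (intro allI impI)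
    fix i :: nat assume "i + 1 < 3" then have "i = 0 \<or> i = 1" by arith
    then show "[a,b,c]!i \<noteq> [a,b,c]!(i+1)" using \<open>a\<noteq>b \<and> b\<noteq>c\<close> by auto
  qed
qed
lemma cond2: "(\<forall>i. i + 1 < (2::nat) \<longrightarrow> [a,b]!i \<noteq> [a,b]!(i+1)) \<longleftrightarrow> a\<noteq>b"
proof
  assume h: "\<forall>i. i + 1 < (2::nat) \<longrightarrow> [a,b]!i \<noteq> [a,b]!(i+1)"
  show "a\<noteq>b" using h[rule_format, of 0] by simp
next
  assume "a\<noteq>b"
  then show "\<forall>i. i + 1 < (2::nat) \<longrightarrow> [a,b]!i \<noteq> [a,b]!(i+1)"
  proof (intro allI impI)
    fix i :: nat assume "i + 1 < 2" then have "i = 0" by arith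
    then show "[a,b]!i \<noteq> [a,b]!(i+1)" using \<open>a\<noteq>b\<close> by auto
  qed
qed

lemma len3: "length xs = 3 \<longleftrightarrow> (\<exists>a b c. xs = [a,b,c])"
  by (auto simp: numeral_3_eq_3 length_Suc_conv)
lemma len2: "length xs = 2 \<longleftrightarrow> (\<exists>a b. xs = [a,b])"
  by (auto simp: numeral_2_eq_2 length_Suc_conv)

lemma kw_unfold: "xs \<in> kautz_words d l \<longleftrightarrow> length xs = l \<and> set xs \<subseteq> {0..d} \<and>
                          (\<forall>i. i + 1 < l \<longrightarrow> xs ! i \<noteq> xs ! (i + 1))"
  unfolding kautz_words_def by (rule mem_Collect_eq)

lemma kw2: "xs \<in> kautz_words d 2 \<longleftrightarrow> (\<exists>a b. xs = [a,b] \<and> a \<le> d \<and> b \<le> d \<and> a \<noteq> b)"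
proof
  assume h: "xs \<in> kautz_words d 2"
  have l: "length xs = 2" using h by (simp add: kw_unfold)
  have s: "set xs \<subseteq> {0..d}" using h by (simp add: kw_unfold)
  have c: "\<forall>i. i + 1 < 2 \<longrightarrow> xs ! i \<noteq> xs ! (i + 1)" using h unfolding kw_unfold by (elim conjE)
  from l obtain a b where x: "xs = [a,b]" unfolding len2 by (elim exE)
  from c[rule_format, of 0] x have "a \<noteq> b" by simp
  moreover from s x have "a \<le> d" "b \<le> d" by auto
  ultimately show "\<exists>a b. xs = [a,b] \<and> a \<le> d \<and> b \<le> d \<and> a \<noteq> b" using x by (intro exI conjI)
next
  assume "\<exists>a b. xs = [a,b] \<and> a \<le> d \<and> b \<le> d \<and> a \<noteq> b"
  then obtain a b where x: "xs = [a,b]" "a \<le> d" "b \<le> d" "a \<noteq> b" by (elim exE conjE)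
  have "\<forall>i. i + 1 < 2 \<longrightarrow> xs ! i \<noteq> xs ! (i + 1)" unfolding x(1) cond2 by (rule x(4))
  moreover have "set xs \<subseteq> {0..d}" "length xs = 2" using x by auto
  ultimately show "xs \<in> kautz_words d 2" unfolding kw_unfold by (intro conjI)
qed

lemma ckw3: "xs \<in> cyclic_kautz_words d 3 \<longleftrightarrow>
   (\<exists>a b c. xs = [a,b,c] \<and> a \<le> d \<and> b \<le> d \<and> c \<le> d \<and> a \<noteq> b \<and> b \<noteq> c \<and> c \<noteq> a)"
proof
  assume h: "xs \<in> cyclic_kautz_words d 3"
  then have h1: "xs \<in> kautz_words d 3" and h2: "last xs \<noteq> hd xs" unfolding cyclic_kautz_words_def by simp_all
  have l: "length xs = 3" using h1 by (simp add: kw_unfold)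
  have s: "set xs \<subseteq> {0..d}" using h1 by (simp add: kw_unfold)
  have c: "\<forall>i. i + 1 < 3 \<longrightarrow> xs ! i \<noteq> xs ! (i + 1)" using h1 unfolding kw_unfold by (elim conjE)
  from l obtain a b c where x: "xs = [a,b,c]" unfolding len3 by (elim exE)
  from c[rule_format, of 0] c[rule_format, of 1] x have "a \<noteq> b" "b \<noteq> c" by simp_all
  moreover from h2 x have "c \<noteq> a" by simp
  moreover from s x have "a \<le> d" "b \<le> d" "c \<le> d" by auto
  ultimately show "\<exists>a b c. xs = [a,b,c] \<and> a \<le> d \<and> b \<le> d \<and> c \<le> d \<and> a \<noteq> b \<and> b \<noteq> c \<and> c \<noteq> a" using x by (intro exI conjI)
next
  assume "\<exists>a b c. xs = [a,b,c] \<and> a \<le> d \<and> b \<le> d \<and> c \<le> d \<and> a \<noteq> b \<and> b \<noteq> c \<and> c \<noteq> a"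
  then obtain a b c where x: "xs = [a,b,c]" "a \<le> d" "b \<le> d" "c \<le> d" "a \<noteq> b" "b \<noteq> c" "c \<noteq> a" by (elim exE conjE)
  have "\<forall>i. i + 1 < 3 \<longrightarrow> xs ! i \<noteq> xs ! (i + 1)" unfolding x(1) cond3 using x by simp
  moreover have "set xs \<subseteq> {0..d}" "length xs = 3" using x by auto
  ultimately have "xs \<in> kautz_words d 3" unfolding kw_unfold by (intro conjI)
  moreover have "last xs \<noteq> hd xs" using x by simp
  ultimately show "xs \<in> cyclic_kautz_words d 3" unfolding cyclic_kautz_words_def by simp
qed

lemma ck_verts: "verts (cyclic_kautz d 3) = cyclic_kautz_words d 3"
  by (simp add: cyclic_kautz_def Defs.verts_def)

lemma ck_arc: "(u, v) \<in> arcs (cyclic_kautz d 3) \<longleftrightarrow>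
   (\<exists>a b c y. u = [a,b,c] \<and> a \<le> d \<and> b \<le> d \<and> c \<le> d \<and> a \<noteq> b \<and> b \<noteq> c \<and> c \<noteq> a
     \<and> y \<le> d \<and> y \<noteq> b \<and> y \<noteq> c \<and> v = [b,c,y])" (is "?L \<longleftrightarrow> ?R")
proof
  assume ?L
  then have h: "u \<in> cyclic_kautz_words d 3" "\<exists>y. y \<le> d \<and> y \<noteq> u ! 1 \<and> y \<noteq> last u \<and> v = tl u @ [y]"
    unfolding cyclic_kautz_def Defs.arcs_def by auto
  from h(1) obtain a b c where "u = [a,b,c]" "a \<le> d" "b \<le> d" "c \<le> d" "a \<noteq> b" "b \<noteq> c" "c \<noteq> a"
    unfolding ckw3 by blast
  with h(2) show ?R by auto
next
  assume ?R
  then obtain a b c y where h: "u = [a,b,c]" "a \<le> d" "b \<le> d" "c \<le> d" "a \<noteq> b" "b \<noteq> c" "c \<noteq> a"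
     "y \<le> d" "y \<noteq> b" "y \<noteq> c" "v = [b,c,y]" by blast
  then have "u \<in> cyclic_kautz_words d 3" unfolding ckw3 by blast
  with h show ?L unfolding cyclic_kautz_def Defs.arcs_def by auto
qed


lemma sk_arc: "(u, v) \<in> arcs (subkautz d 2) \<longleftrightarrow>
   (\<exists>a b y. u = [a,b] \<and> a \<le> d \<and> b \<le> d \<and> a \<noteq> b \<and> y \<le> d \<and> y \<noteq> a \<and> y \<noteq> b \<and> v = [b,y])" (is "?L \<longleftrightarrow> ?R")
proof
  assume ?L
  then have h: "u \<in> kautz_words d 2" "\<exists>y. y \<le> d \<and> y \<noteq> hd u \<and> y \<noteq> last u \<and> v = tl u @ [y]"
    unfolding subkautz_def Defs.arcs_def by auto
  from h(1) obtain a b where "u = [a,b]" "a \<le> d" "b \<le> d" "a \<noteq> b"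
    unfolding kw2 by blast
  with h(2) show ?R by auto
next
  assume ?R
  then obtain a b y where h: "u = [a,b]" "a \<le> d" "b \<le> d" "a \<noteq> b"
     "y \<le> d" "y \<noteq> a" "y \<noteq> b" "v = [b,y]" by blast
  then have "u \<in> kautz_words d 2" unfolding kw2 by blast
  with h show ?L unfolding subkautz_def Defs.arcs_def by auto
qed

lemma k_arc: "(u, v) \<in> arcs (kautz d 2) \<longleftrightarrow>
   (\<exists>a b y. u = [a,b] \<and> a \<le> d \<and> b \<le> d \<and> a \<noteq> b \<and> y \<le> d \<and> y \<noteq> b \<and> v = [b,y])" (is "?L \<longleftrightarrow> ?R")
proof
  assume ?L
  then have h: "u \<in> kautz_words d 2" "\<exists>y. y \<le> d \<and> y \<noteq> last u \<and> v = tl u @ [y]"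
    unfolding kautz_def Defs.arcs_def by auto
  from h(1) obtain a b where "u = [a,b]" "a \<le> d" "b \<le> d" "a \<noteq> b"
    unfolding kw2 by blast
  with h(2) show ?R by auto
next
  assume ?R
  then obtain a b y where h: "u = [a,b]" "a \<le> d" "b \<le> d" "a \<noteq> b"
     "y \<le> d" "y \<noteq> b" "v = [b,y]" by blast
  then have "u \<in> kautz_words d 2" unfolding kw2 by blast
  with h show ?L unfolding kautz_def Defs.arcs_def by auto
qed

lemma sk_verts: "verts (subkautz d 2) = kautz_words d 2"
  by (simp add: subkautz_def Defs.verts_def)

lemma digons: "subkautz d 2 = remove_digons (kautz d 2)"
proof -
  have "arcs (subkautz d 2) = {(u, v) \<in> arcs (kautz d 2). (v, u) \<notin> arcs (kautz d 2)}"
  proof (rule set_eqI, clarify)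
    fix u v
    show "(u, v) \<in> arcs (subkautz d 2) \<longleftrightarrow> (u, v) \<in> {(u, v) \<in> arcs (kautz d 2). (v, u) \<notin> arcs (kautz d 2)}"
      unfolding mem_Collect_eq case_prod_conv sk_arc k_arc by auto
  qed
  then show ?thesis unfolding remove_digons_def
    by (simp add: subkautz_def kautz_def Defs.verts_def Defs.arcs_def)
qed

lemma fresh3:
  assumes "d \<ge> 3" shows "\<exists>z. z \<le> (d::nat) \<and> z \<noteq> p \<and> z \<noteq> q \<and> z \<noteq> r"
proof -
  have "card {p,q,r} \<le> 3" by (simp add: card_insert_if)
  then have "card {p,q,r} < card {0..d}" using assms by simp
  then have "\<not> {0..d} \<subseteq> {p,q,r}"
  proof (intro notI)
    assume "{0..d} \<subseteq> {p,q,r}"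
    then have "card {0..d} \<le> card {p,q,r}" by (intro card_mono) auto
    with \<open>card {p,q,r} < card {0..d}\<close> show False by simp
  qed
  then show ?thesis by auto
qed


lemma out_set: assumes "[a,b,c] \<in> cyclic_kautz_words d 3"
  shows "{w. ([a,b,c], w) \<in> arcs (cyclic_kautz d 3)} = (\<lambda>y. [b,c,y]) ` ({0..d} - {b,c})"
  using assms unfolding ckw3 by (auto simp: ck_arc)

lemma in_set: assumes "[a,b,c] \<in> cyclic_kautz_words d 3"
  shows "{u. (u, [a,b,c]) \<in> arcs (cyclic_kautz d 3)} = (\<lambda>x. [x,a,b]) ` ({0..d} - {a,b})"
  using assms unfolding ckw3 by (auto simp: ck_arc)

lemma card_two: "a \<le> d \<Longrightarrow> b \<le> (d::nat) \<Longrightarrow> a \<noteq> b \<Longrightarrow> card ({0..d} - {a,b}) = d - 1"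
  by (subst card_Diff_subset) auto

lemma out_card: assumes "u \<in> cyclic_kautz_words d 3"
  shows "card {w. (u, w) \<in> arcs (cyclic_kautz d 3)} = d - 1"
proof -
  obtain a b c where x: "u = [a,b,c]" "a \<le> d" "b \<le> d" "c \<le> d" "a \<noteq> b" "b \<noteq> c" "c \<noteq> a"
    using assms unfolding ckw3 by blast
  have "card ((\<lambda>y. [b,c,y]) ` ({0..d} - {b,c})) = d - 1"
    by (subst card_image) (auto simp: inj_on_def card_two x)
  then show ?thesis using out_set[of a b c d] assms x(1) by simp
qed

lemma in_card: assumes "u \<in> cyclic_kautz_words d 3"
  shows "card {w. (w, u) \<in> arcs (cyclic_kautz d 3)} = d - 1"
proof -
  obtain a b c where x: "u = [a,b,c]" "a \<le> d" "b \<le> d" "c \<le> d" "a \<noteq> b" "b \<noteq> c" "c \<noteq> a"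
    using assms unfolding ckw3 by blast
  have "card ((\<lambda>x. [x,a,b]) ` ({0..d} - {a,b})) = d - 1"
    by (subst card_image) (auto simp: inj_on_def card_two x)
  then show ?thesis using in_set[of a b c d] assms x(1) by simp
qed

lemma ck_regular: "regular (cyclic_kautz d 3) (d - 1)"
  unfolding regular_def Defs.out_degree_def Defs.in_degree_def ck_verts
  using out_card in_card by blast

lemma W_eq: "cyclic_kautz_words d 3 = (\<lambda>(a,b,c). [a,b,c]) ` (SIGMA a:{0..d}. SIGMA b:{0..d}-{a}. {0..d}-{a,b})"
proof (rule set_eqI)
  fix xs show "xs \<in> cyclic_kautz_words d 3 \<longleftrightarrow> xs \<in> (\<lambda>(a,b,c). [a,b,c]) ` (SIGMA a:{0..d}. SIGMA b:{0..d}-{a}. {0..d}-{a,b})"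
    unfolding ckw3 by force
qed

lemma card_W: "card (cyclic_kautz_words d 3) = (d+1) * (d * (d - 1))"
proof -
  have inj: "inj_on (\<lambda>(a,b,c). [a,b,c]) (SIGMA a:{0..d}. SIGMA b:{0..d}-{a}. {0..d}-{a,b})"
    by (auto simp: inj_on_def)
  have "card (SIGMA a:{0..d}. SIGMA b:{0..d}-{a}. {0..d}-{a,b}) = (\<Sum>a\<in>{0..d}. \<Sum>b\<in>{0..d}-{a}. card ({0..d}-{a,b}))"
    by (simp add: card_SigmaI)
  also have "\<dots> = (\<Sum>a\<in>{0..d}. \<Sum>b\<in>{0..d}-{a}. d - 1)"
    by (intro sum.cong refl) (auto simp: card_two)
  also have "\<dots> = (d+1) * (d * (d - 1))" by simp
  finally show ?thesis unfolding W_eq by (simp add: card_image[OF inj])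
qed

lemma finite_W: "finite (cyclic_kautz_words d 3)"
  unfolding W_eq by simp

lemma R_sub: "arcs (cyclic_kautz d 3) \<subseteq> cyclic_kautz_words d 3 \<times> cyclic_kautz_words d 3"
  by (auto simp: ck_arc ckw3)

lemma card_R: "card (arcs (cyclic_kautz d 3)) = card (cyclic_kautz_words d 3) * (d - 1)"
proof -
  have e: "arcs (cyclic_kautz d 3) = Sigma (cyclic_kautz_words d 3) (\<lambda>u. {w. (u, w) \<in> arcs (cyclic_kautz d 3)})"
    using R_sub by auto
  have f: "\<forall>u\<in>cyclic_kautz_words d 3. finite {w. (u, w) \<in> arcs (cyclic_kautz d 3)}"
    using R_sub finite_W by (auto intro: finite_subset)
  have "card (arcs (cyclic_kautz d 3)) = card (Sigma (cyclic_kautz_words d 3) (\<lambda>u. {w. (u, w) \<in> arcs (cyclic_kautz d 3)}))"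
    using e by (rule arg_cong)
  also have "\<dots> = (\<Sum>u\<in>cyclic_kautz_words d 3. card {w. (u, w) \<in> arcs (cyclic_kautz d 3)})"
    by (rule card_SigmaI[OF finite_W f])
  also have "\<dots> = (\<Sum>u\<in>cyclic_kautz_words d 3. d - 1)"
    by (intro sum.cong refl) (simp add: out_card)
  finally show ?thesis by simp
qed

lemma arith1: "(d::nat) \<ge> 1 \<Longrightarrow> (d+1) * (d * (d - 1)) = d ^ 3 - d"
proof -
  assume "d \<ge> 1"
  then obtain m where m: "d = m + 1" by (metis le_add_diff_inverse2)
  have "(m+1) ^ 3 = (m+1+1) * ((m+1) * m) + (m+1)" by (simp add: power3_eq_cube algebra_simps)
  then have "d ^ 3 = (d+1) * (d * (d - 1)) + d" using m by simp
  then show ?thesis by simp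
qed

lemma arith2: "(d+1) * (d * (d - 1)) * (d - 1) = (d + 1) * d * ((d::nat) - 1) ^ 2"
  by (cases d) (simp_all add: power2_eq_square algebra_simps)


lemma ck_step: "[a,b,c] \<in> cyclic_kautz_words d 3 \<Longrightarrow> y \<le> d \<Longrightarrow> y \<noteq> b \<Longrightarrow> y \<noteq> c \<Longrightarrow>
   ([a,b,c], [b,c,y]) \<in> arcs (cyclic_kautz d 3)"
  unfolding ckw3 ck_arc by blast

lemma path5:
  assumes u: "[x1,x2,x3] \<in> cyclic_kautz_words d 3" and v: "[y1,y2,y3] \<in> cyclic_kautz_words d 3"
    and ab: "a \<le> d" "b \<le> d" "a \<noteq> x2" "a \<noteq> x3" "b \<noteq> x3" "b \<noteq> a" "y1 \<noteq> a" "y1 \<noteq> b" "y2 \<noteq> b"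
  shows "([x1,x2,x3], [y1,y2,y3]) \<in> arcs (cyclic_kautz d 3) ^^ 5"
proof -
  let ?R = "arcs (cyclic_kautz d 3)"
  from u v have x: "x1 \<le> d" "x2 \<le> d" "x3 \<le> d" "x1 \<noteq> x2" "x2 \<noteq> x3" "x3 \<noteq> x1"
     and y: "y1 \<le> d" "y2 \<le> d" "y3 \<le> d" "y1 \<noteq> y2" "y2 \<noteq> y3" "y3 \<noteq> y1" unfolding ckw3 by auto
  have v1: "[x2,x3,a] \<in> cyclic_kautz_words d 3" using x ab unfolding ckw3 by auto
  have v2: "[x3,a,b] \<in> cyclic_kautz_words d 3" using x ab unfolding ckw3 by auto
  have v3: "[a,b,y1] \<in> cyclic_kautz_words d 3" using y ab unfolding ckw3 by auto
  have v4: "[b,y1,y2] \<in> cyclic_kautz_words d 3" using y ab unfolding ckw3 by auto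
  have s1: "([x1,x2,x3], [x2,x3,a]) \<in> ?R" using ck_step[OF u] ab by simp
  have s2: "([x2,x3,a], [x3,a,b]) \<in> ?R" using ck_step[OF v1] ab by simp
  have s3: "([x3,a,b], [a,b,y1]) \<in> ?R" using ck_step[OF v2] ab y by simp
  have s4: "([a,b,y1], [b,y1,y2]) \<in> ?R" using ck_step[OF v3] ab y by simp
  have s5: "([b,y1,y2], [y1,y2,y3]) \<in> ?R" using ck_step[OF v4] ab y by simp
  have "([x1,x2,x3], [y1,y2,y3]) \<in> ?R ^^ Suc (Suc (Suc (Suc (Suc 0))))"
    by (intro relpow_Suc_I2[OF s1] relpow_Suc_I2[OF s2] relpow_Suc_I2[OF s3] relpow_Suc_I2[OF s4]
        relpow_Suc_I2[OF s5] relpow_0_I)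
  then show ?thesis by (simp add: numeral_eq_Suc)
qed

lemma path4:
  assumes u: "[x1,x2,x3] \<in> cyclic_kautz_words d 3" and v: "[y1,y2,y3] \<in> cyclic_kautz_words d 3"
    and ab: "a \<le> d" "a \<noteq> x2" "a \<noteq> x3" "y1 \<noteq> x3" "y1 \<noteq> a" "y2 \<noteq> a"
  shows "([x1,x2,x3], [y1,y2,y3]) \<in> arcs (cyclic_kautz d 3) ^^ 4"
proof -
  let ?R = "arcs (cyclic_kautz d 3)"
  from u v have x: "x1 \<le> d" "x2 \<le> d" "x3 \<le> d" "x1 \<noteq> x2" "x2 \<noteq> x3" "x3 \<noteq> x1"
     and y: "y1 \<le> d" "y2 \<le> d" "y3 \<le> d" "y1 \<noteq> y2" "y2 \<noteq> y3" "y3 \<noteq> y1" unfolding ckw3 by auto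
  have v1: "[x2,x3,a] \<in> cyclic_kautz_words d 3" using x ab unfolding ckw3 by auto
  have v2: "[x3,a,y1] \<in> cyclic_kautz_words d 3" using x y ab unfolding ckw3 by auto
  have v3: "[a,y1,y2] \<in> cyclic_kautz_words d 3" using y ab unfolding ckw3 by auto
  have s1: "([x1,x2,x3], [x2,x3,a]) \<in> ?R" using ck_step[OF u] ab by simp
  have s2: "([x2,x3,a], [x3,a,y1]) \<in> ?R" using ck_step[OF v1] ab y by simp
  have s3: "([x3,a,y1], [a,y1,y2]) \<in> ?R" using ck_step[OF v2] ab y by simp
  have s4: "([a,y1,y2], [y1,y2,y3]) \<in> ?R" using ck_step[OF v3] ab y by simp
  have "([x1,x2,x3], [y1,y2,y3]) \<in> ?R ^^ Suc (Suc (Suc (Suc 0)))"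
    by (intro relpow_Suc_I2[OF s1] relpow_Suc_I2[OF s2] relpow_Suc_I2[OF s3] relpow_Suc_I2[OF s4]
        relpow_0_I)
  then show ?thesis by (simp add: numeral_eq_Suc)
qed

lemma reach5:
  assumes d: "d \<ge> 3" and u: "u \<in> cyclic_kautz_words d 3" and v: "v \<in> cyclic_kautz_words d 3"
  shows "\<exists>k\<le>5. (u, v) \<in> arcs (cyclic_kautz d 3) ^^ k"
proof -
  obtain x1 x2 x3 where ux: "u = [x1,x2,x3]" and x: "x1 \<le> d" "x2 \<le> d" "x3 \<le> d" "x1 \<noteq> x2" "x2 \<noteq> x3" "x3 \<noteq> x1"
    using u unfolding ckw3 by blast
  obtain y1 y2 y3 where vy: "v = [y1,y2,y3]" and y: "y1 \<le> d" "y2 \<le> d" "y3 \<le> d" "y1 \<noteq> y2" "y2 \<noteq> y3" "y3 \<noteq> y1"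
    using v unfolding ckw3 by blast
  note uu = u[unfolded ux] and vv = v[unfolded vy]
  show ?thesis
  proof (cases "y2 \<noteq> x2 \<and> y2 \<noteq> x3")
    case True
    obtain b where b: "b \<le> d" "b \<noteq> x3" "b \<noteq> y1" "b \<noteq> y2" using fresh3[OF d] by blast
    have "(u, v) \<in> arcs (cyclic_kautz d 3) ^^ 5"
      unfolding ux vy by (rule path5[OF uu vv, of y2 b]) (use True b y in auto)
    then show ?thesis by blast
  next
    case False
    obtain a where a: "a \<le> d" "a \<noteq> x2" "a \<noteq> x3" "a \<noteq> y1" using fresh3[OF d] by blast
    show ?thesis
    proof (cases "y2 = x3")
      case True
      obtain b where b: "b \<le> d" "b \<noteq> x3" "b \<noteq> a" "b \<noteq> y1" using fresh3[OF d] by blast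
      have "(u, v) \<in> arcs (cyclic_kautz d 3) ^^ 5"
        unfolding ux vy by (rule path5[OF uu vv, of a b]) (use True a b y in auto)
      then show ?thesis by blast
    next
      case y2: False
      with False have y2x2: "y2 = x2" by blast
      show ?thesis
      proof (cases "y1 = x3")
        case True
        obtain b where b: "b \<le> d" "b \<noteq> x3" "b \<noteq> a" "b \<noteq> y2" using fresh3[OF d] by blast
        have "(u, v) \<in> arcs (cyclic_kautz d 3) ^^ 5"
          unfolding ux vy by (rule path5[OF uu vv, of a b]) (use True a b y in auto)
        then show ?thesis by blast
      next
        case y1: False
        have "(u, v) \<in> arcs (cyclic_kautz d 3) ^^ 4"
          unfolding ux vy by (rule path4[OF uu vv, of a]) (use y1 y2x2 a y in auto)
        then show ?thesis by (intro exI[of _ 4]) simp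
      qed
    qed
  qed
qed

lemma pow_small: "R ^^ 1 = R" "R ^^ 2 = R O R" "R ^^ 3 = R O R O R" "R ^^ 4 = R O R O R O R"
  by (simp_all add: numeral_eq_Suc relpow_commute O_assoc)

lemma no_short: "k < 5 \<Longrightarrow> ([0,1,2], [2,1,0]) \<notin> arcs (cyclic_kautz d 3) ^^ k"
proof -
  assume "k < 5"
  then have "k = 0 \<or> k = 1 \<or> k = 2 \<or> k = 3 \<or> k = 4" by arith
  then show ?thesis
    by (elim disjE) (simp_all only: pow_small relpow.simps(1) relcomp_unfold mem_Collect_eq case_prod_conv ck_arc, auto)
qed


lemma dist_le: "(\<exists>k\<le>5. (u, v) \<in> arcs G ^^ k) \<Longrightarrow> dg_dist G u v \<le> 5"
proof -
  assume "\<exists>k\<le>5. (u, v) \<in> arcs G ^^ k"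
  then obtain k where k: "k \<le> 5" "(u, v) \<in> arcs G ^^ k" by blast
  have "dg_dist G u v \<le> enat k" unfolding dg_dist_def by (rule INF_lower) (use k in simp)
  also have "enat k \<le> 5" using k(1) by (simp add: numeral_eq_enat)
  finally show ?thesis .
qed

lemma W012: "d \<ge> 3 \<Longrightarrow> [0,1,2] \<in> cyclic_kautz_words d 3" "d \<ge> 3 \<Longrightarrow> [2,1,0] \<in> cyclic_kautz_words d 3"
  unfolding ckw3 by auto

lemma dist5: assumes "d \<ge> 3" shows "dg_dist (cyclic_kautz d 3) [0,1,2] [2,1,0] = 5"
proof (rule antisym)
  show "dg_dist (cyclic_kautz d 3) [0,1,2] [2,1,0] \<le> 5"
    by (rule dist_le, rule reach5[OF assms W012[OF assms]])
  show "5 \<le> dg_dist (cyclic_kautz d 3) [0,1,2] [2,1,0]"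
    unfolding dg_dist_def
  proof (rule INF_greatest)
    fix k assume "k \<in> {k. ([0,1,2], [2,1,0]) \<in> arcs (cyclic_kautz d 3) ^^ k}"
    then have "\<not> k < 5" using no_short by auto
    then show "5 \<le> enat k" by (simp add: numeral_eq_enat)
  qed
qed

lemma diam5: assumes "d \<ge> 3" shows "diameter (cyclic_kautz d 3) = 5"
proof (rule antisym)
  show "diameter (cyclic_kautz d 3) \<le> 5"
    unfolding diameter_def ck_verts
    by (intro SUP_least dist_le reach5[OF assms])
  have "dg_dist (cyclic_kautz d 3) [0,1,2] [2,1,0] \<le> diameter (cyclic_kautz d 3)"
    unfolding diameter_def ck_verts
    by (intro SUP_upper2[OF W012(1)[OF assms]] SUP_upper[OF W012(2)[OF assms]])
  then show "5 \<le> diameter (cyclic_kautz d 3)" using dist5[OF assms] by simp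
qed

lemma ld_arcs: "arcs (line_digraph G) = {(a, b). a \<in> arcs G \<and> b \<in> arcs G \<and> snd a = fst b}"
  by (simp add: line_digraph_def Defs.arcs_def)
lemma ld_verts: "verts (line_digraph G) = arcs G"
  by (simp add: line_digraph_def Defs.arcs_def Defs.verts_def)

lemma iso: "dg_iso (cyclic_kautz d 3) (line_digraph (subkautz d 2))"
  unfolding dg_iso_def
proof (intro exI[of _ "\<lambda>u. (take 2 u, drop 1 u)"] conjI ballI)
  show "bij_betw (\<lambda>u. (take 2 u, drop 1 u)) (verts (cyclic_kautz d 3)) (verts (line_digraph (subkautz d 2)))"
    unfolding bij_betw_def ck_verts ld_verts
  proof
    show "inj_on (\<lambda>u. (take 2 u, drop 1 u)) (cyclic_kautz_words d 3)"
    proof (rule inj_onI)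
      fix x y assume "x \<in> cyclic_kautz_words d 3" "y \<in> cyclic_kautz_words d 3"
        and e: "(take 2 x, drop 1 x) = (take 2 y, drop 1 y)"
      then obtain a b c a' b' c' where "x = [a,b,c]" "y = [a',b',c']" unfolding ckw3 by blast
      with e show "x = y" by simp
    qed
    show "(\<lambda>u. (take 2 u, drop 1 u)) ` cyclic_kautz_words d 3 = arcs (subkautz d 2)"
    proof (rule set_eqI, clarify)
      fix p q
      show "((p, q) \<in> (\<lambda>u. (take 2 u, drop 1 u)) ` cyclic_kautz_words d 3) = ((p, q) \<in> arcs (subkautz d 2))"
      proof
        assume "(p, q) \<in> (\<lambda>u. (take 2 u, drop 1 u)) ` cyclic_kautz_words d 3"
        then obtain x where x: "x \<in> cyclic_kautz_words d 3" "p = take 2 x" "q = drop 1 x" by auto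
        then obtain a b c where "x = [a,b,c]" "a \<le> d" "b \<le> d" "c \<le> d" "a \<noteq> b" "b \<noteq> c" "c \<noteq> a"
          unfolding ckw3 by blast
        with x show "(p, q) \<in> arcs (subkautz d 2)" unfolding sk_arc by auto
      next
        assume "(p, q) \<in> arcs (subkautz d 2)"
        then obtain a b y where h: "p = [a,b]" "a \<le> d" "b \<le> d" "a \<noteq> b" "y \<le> d" "y \<noteq> a" "y \<noteq> b" "q = [b,y]"
          unfolding sk_arc by blast
        then have "[a,b,y] \<in> cyclic_kautz_words d 3" unfolding ckw3 by auto
        moreover have "(p, q) = (take 2 [a,b,y], drop 1 [a,b,y])" using h by simp
        ultimately show "(p, q) \<in> (\<lambda>u. (take 2 u, drop 1 u)) ` cyclic_kautz_words d 3" by blast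
      qed
    qed
  qed
next
  fix u v assume u: "u \<in> verts (cyclic_kautz d 3)" and v: "v \<in> verts (cyclic_kautz d 3)"
  from u obtain a b c where x: "u = [a,b,c]" "a \<le> d" "b \<le> d" "c \<le> d" "a \<noteq> b" "b \<noteq> c" "c \<noteq> a"
    unfolding ck_verts ckw3 by blast
  from v obtain a' b' c' where y: "v = [a',b',c']" "a' \<le> d" "b' \<le> d" "c' \<le> d" "a' \<noteq> b'" "b' \<noteq> c'" "c' \<noteq> a'"
    unfolding ck_verts ckw3 by blast
  have fu: "(take 2 u, drop 1 u) \<in> arcs (subkautz d 2)" using x unfolding sk_arc by auto
  have fv: "(take 2 v, drop 1 v) \<in> arcs (subkautz d 2)" using y unfolding sk_arc by auto
  show "((u, v) \<in> arcs (cyclic_kautz d 3)) = (((take 2 u, drop 1 u), take 2 v, drop 1 v) \<in> arcs (line_digraph (subkautz d 2)))"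
    unfolding ld_arcs using fu fv x y by (auto simp: ck_arc)
qed


lemma auto_map:
  assumes inj: "inj_on \<sigma> {0..d}" and img: "\<sigma> ` {0..d} \<subseteq> {0..(d::nat)}"
  shows "automorphism (cyclic_kautz d 3) (map \<sigma>)"
proof -
  have surj: "\<sigma> ` {0..d} = {0..d}" using endo_inj_surj[OF _ img inj] by simp
  have eq: "\<And>x y. x \<le> d \<Longrightarrow> y \<le> d \<Longrightarrow> \<sigma> x = \<sigma> y \<longleftrightarrow> x = y"
    using inj unfolding inj_on_def by auto
  have le: "\<sigma> x \<le> d" if "x \<le> d" for x
  proof -
    have "\<sigma> x \<in> \<sigma> ` {0..d}" using that by simp
    with img show ?thesis by auto
  qed
  have bij: "bij_betw (map \<sigma>) (cyclic_kautz_words d 3) (cyclic_kautz_words d 3)"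
    unfolding bij_betw_def
  proof
    show "inj_on (map \<sigma>) (cyclic_kautz_words d 3)"
    proof (rule inj_onI)
      fix x y assume "x \<in> cyclic_kautz_words d 3" "y \<in> cyclic_kautz_words d 3" and e: "map \<sigma> x = map \<sigma> y"
      then obtain a b c a' b' c' where "x = [a,b,c]" "y = [a',b',c']" "a \<le> d" "b \<le> d" "c \<le> d"
         "a' \<le> d" "b' \<le> d" "c' \<le> d" unfolding ckw3 by blast
      with e eq show "x = y" by simp
    qed
    show "map \<sigma> ` cyclic_kautz_words d 3 = cyclic_kautz_words d 3"
    proof (rule set_eqI)
      fix w show "w \<in> map \<sigma> ` cyclic_kautz_words d 3 \<longleftrightarrow> w \<in> cyclic_kautz_words d 3"
      proof
        assume "w \<in> map \<sigma> ` cyclic_kautz_words d 3"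
        then obtain x where x: "x \<in> cyclic_kautz_words d 3" "w = map \<sigma> x" by blast
        then obtain a b c where "x = [a,b,c]" "a \<le> d" "b \<le> d" "c \<le> d" "a \<noteq> b" "b \<noteq> c" "c \<noteq> a"
          unfolding ckw3 by blast
        with x eq le show "w \<in> cyclic_kautz_words d 3" unfolding ckw3 by auto
      next
        assume "w \<in> cyclic_kautz_words d 3"
        then obtain p q r where w: "w = [p,q,r]" "p \<le> d" "q \<le> d" "r \<le> d" "p \<noteq> q" "q \<noteq> r" "r \<noteq> p"
          unfolding ckw3 by blast
        have "p \<in> \<sigma> ` {0..d}" "q \<in> \<sigma> ` {0..d}" "r \<in> \<sigma> ` {0..d}" using surj w by auto
        then obtain a b c where abc: "a \<le> d" "b \<le> d" "c \<le> d" "p = \<sigma> a" "q = \<sigma> b" "r = \<sigma> c" by auto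
        then have "[a,b,c] \<in> cyclic_kautz_words d 3" unfolding ckw3 using w by auto
        moreover have "w = map \<sigma> [a,b,c]" using abc w by simp
        ultimately show "w \<in> map \<sigma> ` cyclic_kautz_words d 3" by blast
      qed
    qed
  qed
  show ?thesis unfolding automorphism_def ck_verts
  proof (intro conjI bij ballI)
    fix u v assume u: "u \<in> cyclic_kautz_words d 3" and v: "v \<in> cyclic_kautz_words d 3"
    from u obtain a b c where x: "u = [a,b,c]" "a \<le> d" "b \<le> d" "c \<le> d" "a \<noteq> b" "b \<noteq> c" "c \<noteq> a"
      unfolding ckw3 by blast
    from v obtain a' b' c' where y: "v = [a',b',c']" "a' \<le> d" "b' \<le> d" "c' \<le> d" "a' \<noteq> b'" "b' \<noteq> c'" "c' \<noteq> a'"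
      unfolding ckw3 by blast
    show "(u, v) \<in> arcs (cyclic_kautz d 3) \<longleftrightarrow> (map \<sigma> u, map \<sigma> v) \<in> arcs (cyclic_kautz d 3)"
      using x y eq le by (auto simp: ck_arc)
  qed
qed

lemma card3: "a \<le> d \<Longrightarrow> b \<le> d \<Longrightarrow> c \<le> (d::nat) \<Longrightarrow> a \<noteq> b \<Longrightarrow> b \<noteq> c \<Longrightarrow> c \<noteq> a \<Longrightarrow>
   card ({0..d} - {a,b,c}) = d + 1 - 3"
  by (subst card_Diff_subset) auto

lemma vt: "vertex_transitive (cyclic_kautz d 3)"
  unfolding vertex_transitive_def ck_verts
proof (intro ballI)
  fix u v assume u: "u \<in> cyclic_kautz_words d 3" and v: "v \<in> cyclic_kautz_words d 3"
  from u obtain a b c where x: "u = [a,b,c]" "a \<le> d" "b \<le> d" "c \<le> d" "a \<noteq> b" "b \<noteq> c" "c \<noteq> a"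
    unfolding ckw3 by blast
  from v obtain a' b' c' where y: "v = [a',b',c']" "a' \<le> d" "b' \<le> d" "c' \<le> d" "a' \<noteq> b'" "b' \<noteq> c'" "c' \<noteq> a'"
    unfolding ckw3 by blast
  have cd: "card ({0..d} - {a,b,c}) = card ({0..d} - {a',b',c'})"
    using card3[OF x(2-7)] card3[OF y(2-7)] by simp
  obtain g where g: "bij_betw g ({0..d} - {a,b,c}) ({0..d} - {a',b',c'})"
    using finite_same_card_bij[OF _ _ cd] by blast
  define \<sigma> where "\<sigma> x = (if x = a then a' else if x = b then b' else if x = c then c' else g x)" for x
  have gi: "inj_on g ({0..d} - {a,b,c})" using g by (rule bij_betw_imp_inj_on)
  have gimg: "g ` ({0..d} - {a,b,c}) = {0..d} - {a',b',c'}" using g by (rule bij_betw_imp_surj_on)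
  have gin: "g x \<le> d \<and> g x \<noteq> a' \<and> g x \<noteq> b' \<and> g x \<noteq> c'"
    if "x \<le> d" "x \<noteq> a" "x \<noteq> b" "x \<noteq> c" for x
  proof -
    have "x \<in> {0..d} - {a,b,c}" using that by simp
    then have "g x \<in> g ` ({0..d} - {a,b,c})" by (rule imageI)
    then have "g x \<in> {0..d} - {a',b',c'}" by (simp only: gimg)
    then show ?thesis by simp
  qed
  have sa: "\<sigma> a = a'" and sb: "\<sigma> b = b'" and sc: "\<sigma> c = c'"
    using x unfolding \<sigma>_def by simp_all
  have so: "\<sigma> z = g z" if "z \<noteq> a" "z \<noteq> b" "z \<noteq> c" for z
    using that unfolding \<sigma>_def by simp
  have in3: "(z = a \<or> z = b \<or> z = c) \<longleftrightarrow> (\<sigma> z = a' \<or> \<sigma> z = b' \<or> \<sigma> z = c')" if "z \<le> d" for z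
  proof
    assume "z = a \<or> z = b \<or> z = c"
    then show "\<sigma> z = a' \<or> \<sigma> z = b' \<or> \<sigma> z = c'" using sa sb sc by blast
  next
    assume h: "\<sigma> z = a' \<or> \<sigma> z = b' \<or> \<sigma> z = c'"
    show "z = a \<or> z = b \<or> z = c"
    proof (rule ccontr)
      assume "\<not> (z = a \<or> z = b \<or> z = c)"
      then have "z \<noteq> a" "z \<noteq> b" "z \<noteq> c" by simp_all
      with gin[OF that this] so[OF this] h show False by simp
    qed
  qed
  have inj: "inj_on \<sigma> {0..d}"
  proof (rule inj_onI)
    fix x z assume xz: "x \<in> {0..d}" "z \<in> {0..d}" and e: "\<sigma> x = \<sigma> z"
    then have xd: "x \<le> d" and zd: "z \<le> d" by simp_all
    show "x = z"
    proof (cases "x = a \<or> x = b \<or> x = c")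
      case True
      then have "\<sigma> z = a' \<or> \<sigma> z = b' \<or> \<sigma> z = c'" using e in3[OF xd] by simp
      then have "z = a \<or> z = b \<or> z = c" using in3[OF zd] by simp
      with True e show ?thesis using sa sb sc y(5-7) by (elim disjE) simp_all
    next
      case False
      then have "\<not> (\<sigma> z = a' \<or> \<sigma> z = b' \<or> \<sigma> z = c')" using e in3[OF xd] by simp
      then have zF: "\<not> (z = a \<or> z = b \<or> z = c)" using in3[OF zd] by simp
      have "g x = g z" using e so False zF by simp
      moreover have "x \<in> {0..d} - {a,b,c}" "z \<in> {0..d} - {a,b,c}" using xz False zF by auto
      ultimately show ?thesis using gi unfolding inj_on_def by blast
    qed
  qed
  have img: "\<sigma> ` {0..d} \<subseteq> {0..d}"
  proof
    fix w assume "w \<in> \<sigma> ` {0..d}"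
    then obtain z where z: "z \<le> d" "w = \<sigma> z" by auto
    show "w \<in> {0..d}"
    proof (cases "z = a \<or> z = b \<or> z = c")
      case True then show ?thesis using z sa sb sc y(2-4) by auto
    next
      case False then show ?thesis using z so gin[OF z(1)] by auto
    qed
  qed
  have "map \<sigma> u = v" using x y sa sb sc by simp
  then show "\<exists>f. automorphism (cyclic_kautz d 3) f \<and> f u = v"
    using auto_map[OF inj img] by blast
qed

lemma ck_pair: "cyclic_kautz d 3 = (cyclic_kautz_words d 3, arcs (cyclic_kautz d 3))"
  by (simp add: cyclic_kautz_def Defs.arcs_def)

lemma ck_euler: assumes "d \<ge> 3" shows "eulerian (cyclic_kautz d 3)"
proof -
  have "eulerian (cyclic_kautz_words d 3, arcs (cyclic_kautz d 3))"
  proof (rule euler_pair[OF finite_W R_sub])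
    have "([0,1,2],[1,2,0]) \<in> arcs (cyclic_kautz d 3)" using assms by (auto simp: ck_arc)
    then show "arcs (cyclic_kautz d 3) \<noteq> {}" by blast
    show "\<forall>u\<in>cyclic_kautz_words d 3. \<forall>v\<in>cyclic_kautz_words d 3. (u, v) \<in> (arcs (cyclic_kautz d 3))\<^sup>*"
      using reach5[OF assms] relpow_imp_rtrancl by blast
    show "\<forall>v\<in>cyclic_kautz_words d 3. card {w. (v, w) \<in> arcs (cyclic_kautz d 3)} = card {u. (u, v) \<in> arcs (cyclic_kautz d 3)}"
      using out_card in_card by simp
  qed
  then show ?thesis using ck_pair by metis
qed

lemma sk_pair: "subkautz d 2 = (kautz_words d 2, arcs (subkautz d 2))"
  by (simp add: subkautz_def Defs.arcs_def)

lemma V2_eq: "kautz_words d 2 = (\<lambda>(a,b). [a,b]) ` (SIGMA a:{0..d}. {0..d}-{a})"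
proof (rule set_eqI)
  fix xs show "xs \<in> kautz_words d 2 \<longleftrightarrow> xs \<in> (\<lambda>(a,b). [a,b]) ` (SIGMA a:{0..d}. {0..d}-{a})"
    unfolding kw2 by force
qed

lemma proj_reach: "(u, v) \<in> (arcs (cyclic_kautz d 3))\<^sup>* \<Longrightarrow> (tl u, tl v) \<in> (arcs (subkautz d 2))\<^sup>*"
proof (induction rule: rtrancl_induct)
  case base then show ?case by simp
next
  case (step y z)
  from step(2) obtain a b c w where h: "y = [a,b,c]" "a \<le> d" "b \<le> d" "c \<le> d" "a \<noteq> b" "b \<noteq> c" "c \<noteq> a"
     "w \<le> d" "w \<noteq> b" "w \<noteq> c" "z = [b,c,w]" unfolding ck_arc by blast
  then have "(tl y, tl z) \<in> arcs (subkautz d 2)" unfolding sk_arc by auto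
  with step(3) show ?case by (rule rtrancl_into_rtrancl)
qed

lemma sk_euler: assumes "d \<ge> 3" shows "eulerian (subkautz d 2)"
proof -
  have "eulerian (kautz_words d 2, arcs (subkautz d 2))"
  proof (rule euler_pair)
    show "finite (kautz_words d 2)" unfolding V2_eq by simp
    show "arcs (subkautz d 2) \<subseteq> kautz_words d 2 \<times> kautz_words d 2"
      by (auto simp: sk_arc kw2)
    have "([0,1],[1,2]) \<in> arcs (subkautz d 2)" using assms by (auto simp: sk_arc)
    then show "arcs (subkautz d 2) \<noteq> {}" by blast
    show "\<forall>u\<in>kautz_words d 2. \<forall>v\<in>kautz_words d 2. (u, v) \<in> (arcs (subkautz d 2))\<^sup>*"
    proof (intro ballI)
      fix u v assume "u \<in> kautz_words d 2" "v \<in> kautz_words d 2"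
      then obtain p q r s where pq: "u = [p,q]" "p \<le> d" "q \<le> d" "p \<noteq> q" and rs: "v = [r,s]" "r \<le> d" "s \<le> d" "r \<noteq> s"
        unfolding kw2 by blast
      obtain c where c: "c \<le> d" "c \<noteq> p" "c \<noteq> q" using fresh3[OF assms] by blast
      obtain c' where c': "c' \<le> d" "c' \<noteq> r" "c' \<noteq> s" using fresh3[OF assms] by blast
      have "[c,p,q] \<in> cyclic_kautz_words d 3" "[c',r,s] \<in> cyclic_kautz_words d 3"
        using pq rs c c' unfolding ckw3 by auto
      from reach5[OF assms this] have "([c,p,q], [c',r,s]) \<in> (arcs (cyclic_kautz d 3))\<^sup>*"
        using relpow_imp_rtrancl by blast
      from proj_reach[OF this] show "(u, v) \<in> (arcs (subkautz d 2))\<^sup>*" using pq rs by simp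
    qed
    show "\<forall>v\<in>kautz_words d 2. card {w. (v, w) \<in> arcs (subkautz d 2)} = card {u. (u, v) \<in> arcs (subkautz d 2)}"
    proof
      fix v assume "v \<in> kautz_words d 2"
      then obtain a b where ab: "v = [a,b]" "a \<le> d" "b \<le> d" "a \<noteq> b" unfolding kw2 by blast
      have o: "{w. (v, w) \<in> arcs (subkautz d 2)} = (\<lambda>y. [b,y]) ` ({0..d} - {a,b})"
        using ab by (auto simp: sk_arc)
      have i: "{w. (w, v) \<in> arcs (subkautz d 2)} = (\<lambda>x. [x,a]) ` ({0..d} - {a,b})"
        using ab by (auto simp: sk_arc)
      show "card {w. (v, w) \<in> arcs (subkautz d 2)} = card {u. (u, v) \<in> arcs (subkautz d 2)}"
        unfolding o i by (simp add: card_image inj_on_def)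
    qed
  qed
  then show ?thesis using sk_pair by metis
qed

lemma glink: "p \<in> arcs (subkautz d 2) \<Longrightarrow> q \<in> arcs (subkautz d 2) \<Longrightarrow> snd p = fst q \<Longrightarrow>
   (fst p @ [last (snd p)], fst q @ [last (snd q)]) \<in> arcs (cyclic_kautz d 3)"
  by (cases p; cases q) (auto simp: sk_arc ck_arc)

lemma gimg: "(\<lambda>p. fst p @ [last (snd p)]) ` arcs (subkautz d 2) = cyclic_kautz_words d 3"
proof (rule set_eqI)
  fix w show "w \<in> (\<lambda>p. fst p @ [last (snd p)]) ` arcs (subkautz d 2) \<longleftrightarrow> w \<in> cyclic_kautz_words d 3"
  proof
    assume "w \<in> (\<lambda>p. fst p @ [last (snd p)]) ` arcs (subkautz d 2)"
    then obtain p q where "(p, q) \<in> arcs (subkautz d 2)" "w = p @ [last q]" by auto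
    then show "w \<in> cyclic_kautz_words d 3" unfolding sk_arc ckw3 by auto
  next
    assume "w \<in> cyclic_kautz_words d 3"
    then obtain a b c where x: "w = [a,b,c]" "a \<le> d" "b \<le> d" "c \<le> d" "a \<noteq> b" "b \<noteq> c" "c \<noteq> a"
      unfolding ckw3 by blast
    then have "([a,b],[b,c]) \<in> arcs (subkautz d 2)" unfolding sk_arc by auto
    moreover have "w = (\<lambda>p. fst p @ [last (snd p)]) ([a,b],[b,c])" using x by simp
    ultimately show "w \<in> (\<lambda>p. fst p @ [last (snd p)]) ` arcs (subkautz d 2)" by blast
  qed
qed

lemma ginj: "inj_on (\<lambda>p. fst p @ [last (snd p)]) (arcs (subkautz d 2))"
proof (rule inj_onI)
  fix x y assume "x \<in> arcs (subkautz d 2)" "y \<in> arcs (subkautz d 2)"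
    and e: "fst x @ [last (snd x)] = fst y @ [last (snd y)]"
  then show "x = y" by (cases x; cases y) (auto simp: sk_arc)
qed

lemma ck_ham: assumes "d \<ge> 3" shows "hamiltonian (cyclic_kautz d 3)"
proof -
  let ?g = "\<lambda>p. fst p @ [last (snd p)]"
  obtain es where es: "es \<noteq> []" "distinct es" "set es = arcs (subkautz d 2)"
     "\<forall>i. i + 1 < length es \<longrightarrow> snd (es ! i) = fst (es ! (i + 1))" "snd (last es) = fst (hd es)"
    using sk_euler[OF assms] unfolding eulerian_def by blast
  show ?thesis unfolding hamiltonian_def ck_verts
  proof (intro exI[of _ "map ?g es"] conjI allI impI)
    show "map ?g es \<noteq> []" using es by simp
    show "distinct (map ?g es)" using es ginj by (simp add: distinct_map)
    show "set (map ?g es) = cyclic_kautz_words d 3" using es gimg by simp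
  next
    fix i assume i: "i + 1 < length (map ?g es)"
    then have "es ! i \<in> arcs (subkautz d 2)" "es ! (i+1) \<in> arcs (subkautz d 2)"
      using es(3) nth_mem by (force, force)
    with es(4) i show "(map ?g es ! i, map ?g es ! (i + 1)) \<in> arcs (cyclic_kautz d 3)"
      using glink by simp
  next
    have "last es \<in> arcs (subkautz d 2)" "hd es \<in> arcs (subkautz d 2)" using es by auto
    then show "(last (map ?g es), hd (map ?g es)) \<in> arcs (cyclic_kautz d 3)"
      using glink es by (simp add: last_map hd_map)
  qed
qed

theorem mainTheorem13:
  fixes d :: nat
  assumes "d \<ge> 3"
  shows "regular (cyclic_kautz d 3) (d - 1)
    \<and> card (verts (cyclic_kautz d 3)) = d ^ 3 - d
    \<and> card (arcs (cyclic_kautz d 3)) = (d + 1) * d * (d - 1) ^ 2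
    \<and> diameter (cyclic_kautz d 3) = 5
    \<and> dg_iso (cyclic_kautz d 3) (line_digraph (subkautz d 2))
    \<and> subkautz d 2 = remove_digons (kautz d 2)
    \<and> vertex_transitive (cyclic_kautz d 3)
    \<and> eulerian (cyclic_kautz d 3)
    \<and> hamiltonian (cyclic_kautz d 3)"
proof (intro conjI)
  show "regular (cyclic_kautz d 3) (d - 1)" by (rule ck_regular)
  show "card (verts (cyclic_kautz d 3)) = d ^ 3 - d"
    unfolding ck_verts card_W using assms by (intro arith1) simp
  show "card (arcs (cyclic_kautz d 3)) = (d + 1) * d * (d - 1) ^ 2"
    unfolding card_R card_W by (rule arith2)
  show "diameter (cyclic_kautz d 3) = 5" using assms by (rule diam5)
  show "dg_iso (cyclic_kautz d 3) (line_digraph (subkautz d 2))" by (rule iso)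
  show "subkautz d 2 = remove_digons (kautz d 2)" by (rule digons)
  show "vertex_transitive (cyclic_kautz d 3)" by (rule vt)
  show "eulerian (cyclic_kautz d 3)" using assms by (rule ck_euler)
  show "hamiltonian (cyclic_kautz d 3)" using assms by (rule ck_ham)
qed

end
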